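(* Let $\mathbb F\in\{\mathbb R,\mathbb C\}$. Suppose the Lie algebra $\mathfrak g$ is contracted to the Lie algebra $\hat{\mathfrak g}$ by a contraction matrix $\hat U_\varepsilon$ whose entries are polynomials in $\varepsilon$, and $\hat{\mathfrak g}$ is contracted to the Lie algebra $\tilde{\mathfrak g}$ by a contraction matrix $\tilde U_\varepsilon$ whose entries are polynomials in $\varepsilon$ (both nonsingular for $\varepsilon\in(0,1]$). Then $\mathfrak g$ is contracted to $\tilde{\mathfrak g}$ by a contraction matrix whose entries are polynomials in the contraction parameter.
   Context: All algebras are structures on the same $n$-dimensional space, given by structure constants in a fixed basis. A continuous $U:(0,1]\to GL_n(\mathbb F)$ contracts the algebra with structure constants $c^k_{ij}$ to the algebra with structure constants $c'^{k'}_{i'j'}$ if $\lim_{\varepsilon\to0^+}(U_\varepsilon)^i_{i'}(U_\varepsilon)^j_{j'}(U^{-1}_\varepsilon)^{k'}_kc^k_{ij}=c'^{k'}_{i'j'}$ for all indices (summation over repeated indices). *)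

theory Defs
  imports "HOL-Analysis.Analysis" "HOL-Computational_Algebra.Polynomial"
begin

text \<open>Structure constants on an n-dimensional space with basis indexed by the finite
  type 'n: c i j k is c^k_{ij}, i.e. [e_i, e_j] = sum_k c^k_{ij} e_k.\<close>

definition is_lie_algebra :: "('n::finite \<Rightarrow> 'n \<Rightarrow> 'n \<Rightarrow> 'a::field) \<Rightarrow> bool" where
  "is_lie_algebra c \<longleftrightarrow>
     (\<forall>i j k. c i j k = - c j i k) \<and>
     (\<forall>i j k m. (\<Sum>l\<in>UNIV. c i j l * c l k m + c j k l * c l i m + c k i l * c l j m) = 0)"

text \<open>U contracts c to c' (contraction parameter eps in (0,1], limit eps -> 0+).
  Matrix entry (U eps)^i_{i'} is  U eps $ i $ i'.\<close>

definition contracts ::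
  "('n::finite \<Rightarrow> 'n \<Rightarrow> 'n \<Rightarrow> 'a::{real_normed_field}) \<Rightarrow> (real \<Rightarrow> 'a^'n^'n)
     \<Rightarrow> ('n \<Rightarrow> 'n \<Rightarrow> 'n \<Rightarrow> 'a) \<Rightarrow> bool" where
  "contracts c U c' \<longleftrightarrow>
     (\<forall>\<epsilon>\<in>{0<..1}. invertible (U \<epsilon>)) \<and>
     continuous_on {0<..1} U \<and>
     (\<forall>i' j' k'. ((\<lambda>\<epsilon>. \<Sum>i\<in>UNIV. \<Sum>j\<in>UNIV. \<Sum>k\<in>UNIV.
          U \<epsilon> $ i $ i' * U \<epsilon> $ j $ j' * matrix_inv (U \<epsilon>) $ k' $ k * c i j k)
        \<longlongrightarrow> c' i' j' k') (at_right 0))"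

definition poly_matrix_fun :: "(real \<Rightarrow> 'a::real_normed_field^'n::finite^'n) \<Rightarrow> bool" where
  "poly_matrix_fun U \<longleftrightarrow>
     (\<exists>p :: 'n \<Rightarrow> 'n \<Rightarrow> 'a poly. \<forall>\<epsilon>. \<forall>i j. U \<epsilon> $ i $ j = poly (p i j) (of_real \<epsilon>))"

end

theory Submission
  imports Defs
begin


lemma minv:
  fixes A :: "'a::field^'n::finite^'n"
  assumes "invertible A"
  shows "A ** matrix_inv A = mat 1 \<and> matrix_inv A ** A = mat 1"
  using assms unfolding invertible_def matrix_inv_def by (rule someI_ex)

lemma minv_unique:
  fixes A :: "'a::field^'n::finite^'n"
  assumes "A ** X = mat 1" "X ** A = mat 1"
  shows "matrix_inv A = X"
proof -
  have inv: "invertible A" using assms unfolding invertible_def by blast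
  have "matrix_inv A = matrix_inv A ** (A ** X)" using assms by simp
  also have "\<dots> = (matrix_inv A ** A) ** X" by (simp add: matrix_mul_assoc)
  also have "\<dots> = X" using minv[OF inv] by simp
  finally show ?thesis .
qed

lemma minv_mult:
  fixes A B :: "'a::field^'n::finite^'n"
  assumes "invertible A" "invertible B"
  shows "matrix_inv (A ** B) = matrix_inv B ** matrix_inv A"
proof (rule minv_unique)
  have a: "A ** matrix_inv A = mat 1" "matrix_inv A ** A = mat 1" using minv[OF assms(1)] by auto
  have b: "B ** matrix_inv B = mat 1" "matrix_inv B ** B = mat 1" using minv[OF assms(2)] by auto
  have "A ** B ** (matrix_inv B ** matrix_inv A) = A ** (B ** matrix_inv B) ** matrix_inv A"
    by (simp add: matrix_mul_assoc)
  then show "A ** B ** (matrix_inv B ** matrix_inv A) = mat 1" using a b by simp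
  have "matrix_inv B ** matrix_inv A ** (A ** B) = matrix_inv B ** (matrix_inv A ** A) ** B"
    by (simp add: matrix_mul_assoc)
  then show "matrix_inv B ** matrix_inv A ** (A ** B) = mat 1" using a b by simp
qed

definition act :: "'a::field^'n::finite^'n \<Rightarrow> ('n \<Rightarrow> 'n \<Rightarrow> 'n \<Rightarrow> 'a) \<Rightarrow> 'n \<Rightarrow> 'n \<Rightarrow> 'n \<Rightarrow> 'a" where
  "act U c i' j' k' = (\<Sum>i\<in>UNIV. \<Sum>j\<in>UNIV. \<Sum>k\<in>UNIV.
          U $ i $ i' * U $ j $ j' * matrix_inv U $ k' $ k * c i j k)"


lemma move1:
  fixes f :: "'a \<Rightarrow> 'b \<Rightarrow> 'c \<Rightarrow> 'd \<Rightarrow> 'e::comm_monoid_add"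
  shows "(\<Sum>k\<in>K. \<Sum>p\<in>P. \<Sum>q\<in>Q. \<Sum>r\<in>R. f k p q r) = (\<Sum>p\<in>P. \<Sum>q\<in>Q. \<Sum>r\<in>R. \<Sum>k\<in>K. f k p q r)"
  apply (rule trans[OF sum.swap], rule sum.cong[OF refl])
  apply (rule trans[OF sum.swap], rule sum.cong[OF refl])
  by (rule sum.swap)

lemma swap3:
  fixes f :: "'a \<Rightarrow> 'b \<Rightarrow> 'c \<Rightarrow> 'a \<Rightarrow> 'b \<Rightarrow> 'c \<Rightarrow> 'e::comm_monoid_add"
  shows "(\<Sum>i\<in>I. \<Sum>j\<in>J. \<Sum>k\<in>K. \<Sum>p\<in>I. \<Sum>q\<in>J. \<Sum>r\<in>K. f i j k p q r) =
         (\<Sum>p\<in>I. \<Sum>q\<in>J. \<Sum>r\<in>K. \<Sum>i\<in>I. \<Sum>j\<in>J. \<Sum>k\<in>K. f i j k p q r)"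
proof -
  have "(\<Sum>i\<in>I. \<Sum>j\<in>J. \<Sum>k\<in>K. \<Sum>p\<in>I. \<Sum>q\<in>J. \<Sum>r\<in>K. f i j k p q r) =
        (\<Sum>i\<in>I. \<Sum>j\<in>J. \<Sum>p\<in>I. \<Sum>q\<in>J. \<Sum>r\<in>K. \<Sum>k\<in>K. f i j k p q r)"
    by (intro sum.cong refl move1)
  also have "\<dots> = (\<Sum>i\<in>I. \<Sum>p\<in>I. \<Sum>q\<in>J. \<Sum>r\<in>K. \<Sum>j\<in>J. \<Sum>k\<in>K. f i j k p q r)"
    by (intro sum.cong refl move1)
  also have "\<dots> = (\<Sum>p\<in>I. \<Sum>q\<in>J. \<Sum>r\<in>K. \<Sum>i\<in>I. \<Sum>j\<in>J. \<Sum>k\<in>K. f i j k p q r)"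
    by (rule move1)
  finally show ?thesis .
qed

lemma rev3:
  fixes f :: "'a \<Rightarrow> 'b \<Rightarrow> 'c \<Rightarrow> 'e::comm_monoid_add"
  shows "(\<Sum>r\<in>R. \<Sum>q\<in>Q. \<Sum>p\<in>P. f p q r) = (\<Sum>p\<in>P. \<Sum>q\<in>Q. \<Sum>r\<in>R. f p q r)"
proof -
  have "(\<Sum>r\<in>R. \<Sum>q\<in>Q. \<Sum>p\<in>P. f p q r) = (\<Sum>q\<in>Q. \<Sum>r\<in>R. \<Sum>p\<in>P. f p q r)"
    by (rule sum.swap)
  also have "\<dots> = (\<Sum>q\<in>Q. \<Sum>p\<in>P. \<Sum>r\<in>R. f p q r)"
    by (intro sum.cong refl sum.swap)
  also have "\<dots> = (\<Sum>p\<in>P. \<Sum>q\<in>Q. \<Sum>r\<in>R. f p q r)"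
    by (rule sum.swap)
  finally show ?thesis .
qed

lemma act_comp:
  fixes A B :: "'a::field^'n::finite^'n"
  assumes "invertible A" "invertible B"
  shows "act (A ** B) c a b d = act B (act A c) a b d"
proof -
  let ?F = "\<lambda>i j k p q r. A$i$p * B$p$a * (A$j$q * B$q$b) * (matrix_inv B$d$r * matrix_inv A$r$k) * c i j k"
  have "act (A ** B) c a b d = (\<Sum>i\<in>UNIV. \<Sum>j\<in>UNIV. \<Sum>k\<in>UNIV. \<Sum>r\<in>UNIV. \<Sum>q\<in>UNIV. \<Sum>p\<in>UNIV. ?F i j k p q r)"
    unfolding act_def minv_mult[OF assms]
    unfolding matrix_matrix_mult_def
    by (simp add: sum_distrib_left sum_distrib_right)
  also have "\<dots> = (\<Sum>i\<in>UNIV. \<Sum>j\<in>UNIV. \<Sum>k\<in>UNIV. \<Sum>p\<in>UNIV. \<Sum>q\<in>UNIV. \<Sum>r\<in>UNIV. ?F i j k p q r)"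
    by (rule sum.cong[OF refl], rule sum.cong[OF refl], rule sum.cong[OF refl], rule rev3)
  also have "\<dots> = (\<Sum>p\<in>UNIV. \<Sum>q\<in>UNIV. \<Sum>r\<in>UNIV. \<Sum>i\<in>UNIV. \<Sum>j\<in>UNIV. \<Sum>k\<in>UNIV. ?F i j k p q r)"
    by (rule swap3)
  also have "\<dots> = act B (act A c) a b d"
    unfolding act_def
    by (simp add: sum_distrib_left sum_distrib_right mult_ac)
  finally show ?thesis .
qed



lemma minv_cramer:
  fixes A :: "'a::field^'n::finite^'n"
  assumes d: "det A \<noteq> 0"
  shows "matrix_inv A $ k $ j = det (\<chi> i l. if l = k then (if i = j then 1 else 0) else A$i$l) / det A"
proof -
  have inv: "invertible A" using d invertible_det_nz by blast
  have "A *v (\<chi> k. matrix_inv A $ k $ j) = (\<chi> i. if i = j then 1 else 0)"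
  proof -
    have "A ** matrix_inv A = mat 1" using minv[OF inv] by simp
    then have "\<And>i. (A ** matrix_inv A) $ i $ j = mat 1 $ i $ j" by simp
    then show ?thesis
      by (simp add: vec_eq_iff matrix_vector_mult_def matrix_matrix_mult_def mat_def)
  qed
  then have "(\<chi> k. matrix_inv A $ k $ j) = (\<chi> k. det (\<chi> i l. if l = k then (\<chi> i. if i = j then 1 else 0) $ i else A$i$l) / det A)"
    using cramer[OF d] by blast
  then have "(\<chi> k. matrix_inv A $ k $ j) $ k = (\<chi> k. det (\<chi> i l. if l = k then (\<chi> i. if i = j then 1 else 0) $ i else A$i$l) / det A) $ k"
    by simp
  moreover have "(\<chi> i l. if l = k then (\<chi> i. if i = j then 1 else 0) $ i else A$i$l) =
     (\<chi> i l. if l = k then (if i = j then 1 else (0::'a)) else A$i$l)"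
    by (simp add: vec_eq_iff)
  ultimately show ?thesis by simp
qed

lemma poly_det:
  fixes P :: "'a::comm_ring_1 poly^'n::finite^'n"
  shows "poly (det P) x = det (\<chi> i j. poly (P$i$j) x)"
  unfolding det_def by (simp add: poly_sum poly_prod)

lemma poly_factor0:
  fixes p :: "'a::field poly"
  assumes "p \<noteq> 0"
  shows "\<exists>m p1. poly p1 0 \<noteq> 0 \<and> (\<forall>x. poly p x = x^m * poly p1 x)"
proof -
  obtain q where q: "p = [:- 0, 1:] ^ order 0 p * q" "\<not> [:- 0, 1:] dvd q"
    using order_decomp[OF assms, of 0] by blast
  have "poly q 0 \<noteq> 0" using q(2) poly_eq_0_iff_dvd by blast
  moreover have "\<forall>x. poly p x = x^(order 0 p) * poly q x"
    by (subst q(1)) (simp add: poly_power)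
  ultimately show ?thesis by blast
qed



lemma of_real_tendsto0: "((\<lambda>\<epsilon>::real. (of_real \<epsilon>::'a::real_normed_algebra_1)) \<longlongrightarrow> 0) (at_right 0)"
  using tendsto_of_real[OF tendsto_ident_at[of "0::real" "{0<..}"], where 'a='a] by simp

lemma poly_tendsto0: "((\<lambda>\<epsilon>::real. poly p (of_real \<epsilon>::'a::real_normed_field)) \<longlongrightarrow> poly p 0) (at_right 0)"
  by (intro tendsto_poly of_real_tendsto0)

lemma rat_lim:
  fixes Q D D1 R E :: "'a::real_normed_field poly"
  assumes D: "\<forall>x. poly D x = x^m * poly D1 x" "poly D1 0 \<noteq> 0"
    and E: "E \<noteq> 0"
    and lim: "((\<lambda>\<epsilon>::real. poly R (of_real \<epsilon>) / poly E (of_real \<epsilon>)) \<longlongrightarrow> 0) (at_right 0)"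
    and N: "m < N"
  shows "((\<lambda>\<epsilon>::real. poly Q (of_real \<epsilon>) / poly D (of_real \<epsilon>) *
             (poly R (of_real (\<epsilon>^N)) / poly E (of_real (\<epsilon>^N)))) \<longlongrightarrow> 0) (at_right 0)"
proof (cases "R = 0")
  case True then show ?thesis by simp
next
  case False
  obtain r R1 where R1: "poly R1 0 \<noteq> 0" "\<forall>x. poly R x = x^r * poly R1 x"
    using poly_factor0[OF False] by blast
  obtain s E1 where E1: "poly E1 0 \<noteq> 0" "\<forall>x. poly E x = x^s * poly E1 x"
    using poly_factor0[OF E] by blast
  have rs: "s < r"
  proof (rule ccontr)
    assume "\<not> s < r"
    then have rs: "r \<le> s" by simp
    have ev: "eventually (\<lambda>\<epsilon>::real. norm (poly R1 (of_real \<epsilon>) / poly E1 (of_real \<epsilon>))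
               \<le> norm (poly R (of_real \<epsilon>) / poly E (of_real \<epsilon>) :: 'a)) (at_right 0)"
      unfolding eventually_at_right_field
    proof (intro exI[of _ 1] conjI allI impI)
      fix \<epsilon> :: real assume e: "0 < \<epsilon>" "\<epsilon> < 1"
      let ?x = "of_real \<epsilon> :: 'a"
      have x0: "?x \<noteq> 0" using e by simp
      have "poly R ?x / poly E ?x = (poly R1 ?x / poly E1 ?x) / ?x^(s-r)"
      proof -
        have "?x^s = ?x^r * ?x^(s-r)" using rs by (simp add: power_add[symmetric])
        then show ?thesis using R1 E1 x0 by simp
      qed
      then have "norm (poly R ?x / poly E ?x) = norm (poly R1 ?x / poly E1 ?x) / \<epsilon>^(s-r)"
        using e by (simp add: norm_divide norm_power norm_mult)
      moreover have "\<epsilon>^(s-r) \<le> 1" "0 < \<epsilon>^(s-r)" using e by (auto simp: power_le_one)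
      ultimately show "norm (poly R1 ?x / poly E1 ?x) \<le> norm (poly R ?x / poly E ?x)"
        by (simp add: le_divide_eq mult_left_le)
    qed simp
    have "norm (poly R1 0 / poly E1 0) \<le> norm (0::'a)"
      by (rule tendsto_le[OF _ tendsto_norm[OF lim] tendsto_norm[OF tendsto_divide[OF poly_tendsto0 poly_tendsto0]] ev])
         (auto simp: E1)
    then show False using R1 E1 by simp
  qed
  define k where "k = N * r - N * s - m"
  have k: "0 < k" "N * r = k + m + N * s"
  proof -
    have e1: "N * r - N * s = N*(r-s)" by (simp add: diff_mult_distrib2)
    have e2: "N \<le> N*(r-s)" using rs by (simp add: Suc_le_eq)
    have e3: "N * s \<le> N * r" using rs by simp
    have "m < N * r - N * s" using e1 e2 N by linarith
    then show "0 < k" "N * r = k + m + N * s" using e3 unfolding k_def by arith+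
  qed
  have tN: "((\<lambda>\<epsilon>::real. (of_real \<epsilon>::'a)^N) \<longlongrightarrow> 0) (at_right 0)"
    using tendsto_power[OF of_real_tendsto0, of N] N by (simp add: zero_power)
  have lim2: "((\<lambda>\<epsilon>::real. poly Q (of_real \<epsilon>) / poly D1 (of_real \<epsilon>) *
      (poly R1 ((of_real \<epsilon>)^N) / poly E1 ((of_real \<epsilon>)^N)) * (of_real \<epsilon>)^k) \<longlongrightarrow>
      poly Q 0 / poly D1 0 * (poly R1 0 / poly E1 0) * (0::'a)^k) (at_right 0)"
    by (intro tendsto_mult tendsto_divide poly_tendsto0 tendsto_poly tN tendsto_power of_real_tendsto0)
       (auto simp: D E1)
  then have lim3: "((\<lambda>\<epsilon>::real. poly Q (of_real \<epsilon>) / poly D1 (of_real \<epsilon>) *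
      (poly R1 ((of_real \<epsilon>)^N) / poly E1 ((of_real \<epsilon>)^N)) * (of_real \<epsilon>)^k) \<longlongrightarrow> (0::'a)) (at_right 0)"
    using k by (simp add: zero_power)
  show ?thesis
  proof (rule tendsto_cong[THEN iffD1, OF _ lim3])
    show "\<forall>\<^sub>F \<epsilon> in at_right 0. poly Q (of_real \<epsilon>) / poly D1 (of_real \<epsilon>) *
      (poly R1 ((of_real \<epsilon>)^N) / poly E1 ((of_real \<epsilon>)^N)) * (of_real \<epsilon>)^k =
      poly Q (of_real \<epsilon>) / poly D (of_real \<epsilon>) *
             (poly R (of_real (\<epsilon>^N)) / poly E (of_real (\<epsilon>^N)) :: 'a)"
      unfolding eventually_at_right_field
    proof (intro exI[of _ 1] conjI allI impI)
      fix \<epsilon> :: real assume e: "0 < \<epsilon>" "\<epsilon> < 1"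
      let ?x = "of_real \<epsilon> :: 'a"
      have x0: "?x \<noteq> 0" using e by simp
      have p: "(?x^N)^r = ?x^k * ?x^m * (?x^N)^s"
        by (simp add: power_mult[symmetric] k(2) power_add)
      show "poly Q ?x / poly D1 ?x * (poly R1 (?x^N) / poly E1 (?x^N)) * ?x^k =
            poly Q ?x / poly D ?x * (poly R (of_real (\<epsilon>^N)) / poly E (of_real (\<epsilon>^N)))"
      proof (cases "poly D1 ?x = 0 \<or> poly E1 (?x^N) = 0")
        case True then show ?thesis using D E1 by auto
      next
        case False
        then show ?thesis using D R1 E1 x0 p by (simp add: field_simps)
      qed
    qed simp
  qed
qed



lemma poly_rep:
  fixes U :: "real \<Rightarrow> 'a::real_normed_field^'n::finite^'n"
  assumes p: "\<forall>\<epsilon> i j. U \<epsilon> $ i $ j = poly (p i j) (of_real \<epsilon>)"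
  shows "det (U \<epsilon>) = poly (det (\<chi> i j. p i j)) (of_real \<epsilon>)"
    and "det (U \<epsilon>) \<noteq> 0 \<Longrightarrow> matrix_inv (U \<epsilon>) $ k $ j =
      poly (det (\<chi> i l. if l = k then [:if i = j then 1 else 0:] else p i l)) (of_real \<epsilon>) / det (U \<epsilon>)"
proof -
  have U: "U \<epsilon> = (\<chi> i j. poly (p i j) (of_real \<epsilon>))" using p by (simp add: vec_eq_iff)
  show "det (U \<epsilon>) = poly (det (\<chi> i j. p i j)) (of_real \<epsilon>)"
    unfolding poly_det U by simp
  assume d: "det (U \<epsilon>) \<noteq> 0"
  have "(\<chi> i l. if l = k then (if i = j then 1 else 0) else U \<epsilon> $ i $ l) =
        (\<chi> i l. poly ((\<chi> i l. if l = k then [:if i = j then 1 else 0:] else p i l) $ i $ l) (of_real \<epsilon>))"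
    using p by (simp add: vec_eq_iff)
  then show "matrix_inv (U \<epsilon>) $ k $ j =
      poly (det (\<chi> i l. if l = k then [:if i = j then 1 else 0:] else p i l)) (of_real \<epsilon>) / det (U \<epsilon>)"
    unfolding minv_cramer[OF d] poly_det by simp
qed

lemma poly_cont:
  fixes U :: "real \<Rightarrow> 'a::real_normed_field^'n::finite^'n"
  assumes "poly_matrix_fun U"
  shows "continuous_on S U"
proof -
  obtain p where p: "\<forall>\<epsilon> i j. U \<epsilon> $ i $ j = poly (p i j) (of_real \<epsilon>)"
    using assms unfolding poly_matrix_fun_def by blast
  have "U = (\<lambda>\<epsilon>. \<chi> i j. poly (p i j) (of_real \<epsilon>))" using p by (simp add: vec_eq_iff fun_eq_iff)
  moreover have "continuous_on S (\<lambda>\<epsilon>. \<chi> i j. poly (p i j) (of_real \<epsilon>))"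
    by (intro continuous_on_vec_lambda continuous_on_poly continuous_intros)
  ultimately show ?thesis by simp
qed

lemma act_add:
  "act B (\<lambda>i j k. Y i j k + Z i j k) a b d = act B Y a b d + act B Z a b d"
  by (simp add: act_def sum.distrib ring_distribs)

lemma contracts_act: "contracts c U c' \<longleftrightarrow>
     (\<forall>\<epsilon>\<in>{0<..1}. invertible (U \<epsilon>)) \<and> continuous_on {0<..1} U \<and>
     (\<forall>i' j' k'. ((\<lambda>\<epsilon>. act (U \<epsilon>) c i' j' k') \<longlongrightarrow> c' i' j' k') (at_right 0))"
  unfolding contracts_def act_def by simp



lemma main_gen:
  fixes g gh gt :: "'n::finite \<Rightarrow> 'n \<Rightarrow> 'n \<Rightarrow> 'a::real_normed_field"
    and Uh Ut :: "real \<Rightarrow> 'a^'n^'n"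
  assumes ch: "contracts g Uh gh" and phm: "poly_matrix_fun Uh"
    and ct: "contracts gh Ut gt" and ptm: "poly_matrix_fun Ut"
  shows "\<exists>U. contracts g U gt \<and> poly_matrix_fun U"
proof -
  obtain ph where ph: "\<forall>\<epsilon> i j. Uh \<epsilon> $ i $ j = poly (ph i j) (of_real \<epsilon>)"
    using phm unfolding poly_matrix_fun_def by blast
  obtain pt where pt: "\<forall>\<epsilon> i j. Ut \<epsilon> $ i $ j = poly (pt i j) (of_real \<epsilon>)"
    using ptm unfolding poly_matrix_fun_def by blast
  define Dh where "Dh = det (\<chi> i j. ph i j)"
  define Qh where "Qh = (\<lambda>k j. det (\<chi> i l. if l = k then [:if i = j then 1 else 0:] else ph i l))"
  define Dt where "Dt = det (\<chi> i j. pt i j)"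
  define Qt where "Qt = (\<lambda>k j. det (\<chi> i l. if l = k then [:if i = j then 1 else 0:] else pt i l))"
  have detH: "\<And>\<epsilon>. det (Uh \<epsilon>) = poly Dh (of_real \<epsilon>)" unfolding Dh_def by (rule poly_rep(1)[OF ph])
  have detT: "\<And>\<epsilon>. det (Ut \<epsilon>) = poly Dt (of_real \<epsilon>)" unfolding Dt_def by (rule poly_rep(1)[OF pt])
  have invH: "\<And>\<epsilon> k j. det (Uh \<epsilon>) \<noteq> 0 \<Longrightarrow> matrix_inv (Uh \<epsilon>) $ k $ j = poly (Qh k j) (of_real \<epsilon>) / poly Dh (of_real \<epsilon>)"
    unfolding Qh_def using poly_rep(2)[OF ph] detH by simp
  have invT: "\<And>\<epsilon> k j. det (Ut \<epsilon>) \<noteq> 0 \<Longrightarrow> matrix_inv (Ut \<epsilon>) $ k $ j = poly (Qt k j) (of_real \<epsilon>) / poly Dt (of_real \<epsilon>)"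
    unfolding Qt_def using poly_rep(2)[OF pt] detT by simp
  have invh: "\<And>\<epsilon>. \<epsilon> \<in> {0<..1} \<Longrightarrow> invertible (Uh \<epsilon>)"
   and limH: "\<And>i j k. ((\<lambda>\<epsilon>. act (Uh \<epsilon>) g i j k) \<longlongrightarrow> gh i j k) (at_right 0)"
    using ch unfolding contracts_act by auto
  have invt: "\<And>\<epsilon>. \<epsilon> \<in> {0<..1} \<Longrightarrow> invertible (Ut \<epsilon>)"
   and limT: "\<And>i j k. ((\<lambda>\<epsilon>. act (Ut \<epsilon>) gh i j k) \<longlongrightarrow> gt i j k) (at_right 0)"
    using ct unfolding contracts_act by auto
  have dh: "\<And>\<epsilon>. \<epsilon> \<in> {0<..1} \<Longrightarrow> poly Dh (of_real \<epsilon>) \<noteq> 0"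
  proof -
    fix \<epsilon> :: real assume e: "\<epsilon> \<in> {0<..1}"
    have "det (Uh \<epsilon>) \<noteq> 0" using invh[OF e] by (simp add: invertible_det_nz)
    then show "poly Dh (of_real \<epsilon>) \<noteq> 0" using detH by simp
  qed
  have dt: "\<And>\<epsilon>. \<epsilon> \<in> {0<..1} \<Longrightarrow> poly Dt (of_real \<epsilon>) \<noteq> 0"
  proof -
    fix \<epsilon> :: real assume e: "\<epsilon> \<in> {0<..1}"
    have "det (Ut \<epsilon>) \<noteq> 0" using invt[OF e] by (simp add: invertible_det_nz)
    then show "poly Dt (of_real \<epsilon>) \<noteq> 0" using detT by simp
  qed
  have Dh0: "Dh \<noteq> 0" using dh[of 1] by auto
  have Dt0: "Dt \<noteq> 0" using dt[of 1] by auto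
  obtain m Dt1 where Dt1: "poly Dt1 0 \<noteq> 0" "\<forall>x. poly Dt x = x^m * poly Dt1 x"
    using poly_factor0[OF Dt0] by blast
  define N where "N = Suc m"
  define U where "U = (\<lambda>\<epsilon>. Uh (\<epsilon>^N) ** Ut \<epsilon>)"
  have pU: "poly_matrix_fun U"
    unfolding poly_matrix_fun_def
  proof (intro exI[of _ "\<lambda>i j. \<Sum>k\<in>UNIV. pcompose (ph i k) (monom 1 N) * pt k j"] allI)
    fix \<epsilon> :: real and i j
    show "U \<epsilon> $ i $ j = poly (\<Sum>k\<in>UNIV. pcompose (ph i k) (monom 1 N) * pt k j) (of_real \<epsilon>)"
      unfolding U_def using ph pt
      by (simp add: matrix_matrix_mult_def poly_sum poly_pcompose poly_monom of_real_power)
  qed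
  have eN: "\<And>\<epsilon>::real. \<epsilon> \<in> {0<..1} \<Longrightarrow> \<epsilon>^N \<in> {0<..1}"
    by (auto simp: power_le_one)
  have invU: "\<forall>\<epsilon>\<in>{0<..1}. invertible (U \<epsilon>)"
    unfolding U_def using invh invt eN invertible_mult by blast
  define S where "S = (\<lambda>i j k. \<Sum>a\<in>UNIV. \<Sum>b\<in>UNIV. \<Sum>c\<in>UNIV. ph a i * ph b j * Qh k c * [:g a b c:])"
  define R where "R = (\<lambda>i j k. S i j k - [:gh i j k:] * Dh)"
  have Xrep: "act (Uh \<epsilon>) g i j k - gh i j k = poly (R i j k) (of_real \<epsilon>) / poly Dh (of_real \<epsilon>)"
    if e: "\<epsilon> \<in> {0<..1}" for \<epsilon> i j k
  proof -
    have d: "det (Uh \<epsilon>) \<noteq> 0" using dh[OF e] detH by simp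
    have "act (Uh \<epsilon>) g i j k = poly (S i j k) (of_real \<epsilon>) / poly Dh (of_real \<epsilon>)"
      unfolding act_def S_def invH[OF d] using ph
      by (simp add: poly_sum sum_divide_distrib mult_ac)
    then show ?thesis unfolding R_def using dh[OF e] by (simp add: field_simps)
  qed
  have limR: "((\<lambda>\<epsilon>::real. poly (R i j k) (of_real \<epsilon>) / poly Dh (of_real \<epsilon>)) \<longlongrightarrow> 0) (at_right 0)" for i j k
  proof (rule tendsto_cong[THEN iffD1, OF _ LIM_zero[OF limH[of i j k]]])
    show "\<forall>\<^sub>F \<epsilon> in at_right 0. act (Uh \<epsilon>) g i j k - gh i j k = poly (R i j k) (of_real \<epsilon>) / poly Dh (of_real \<epsilon>)"
      unfolding eventually_at_right_field
      by (intro exI[of _ 1] conjI allI impI Xrep) auto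
  qed
  have limP: "((\<lambda>\<epsilon>. matrix_inv (Ut \<epsilon>) $ d $ k * (act (Uh (\<epsilon>^N)) g i j k - gh i j k)) \<longlongrightarrow> 0) (at_right 0)"
    for i j k d
  proof (rule tendsto_cong[THEN iffD1, OF _ rat_lim[OF Dt1(2) Dt1(1) Dh0 limR, of N "Qt d k"]])
    show "m < N" unfolding N_def by simp
    show "\<forall>\<^sub>F \<epsilon> in at_right 0. poly (Qt d k) (of_real \<epsilon>) / poly Dt (of_real \<epsilon>) *
         (poly (R i j k) (of_real (\<epsilon> ^ N)) / poly Dh (of_real (\<epsilon> ^ N))) =
         matrix_inv (Ut \<epsilon>) $ d $ k * (act (Uh (\<epsilon> ^ N)) g i j k - gh i j k)"
      unfolding eventually_at_right_field
    proof (intro exI[of _ 1] conjI allI impI)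
      fix \<epsilon> :: real assume "0 < \<epsilon>" "\<epsilon> < 1"
      then have e: "\<epsilon> \<in> {0<..1}" by auto
      have d: "det (Ut \<epsilon>) \<noteq> 0" using dt[OF e] detT by simp
      show "poly (Qt d k) (of_real \<epsilon>) / poly Dt (of_real \<epsilon>) *
         (poly (R i j k) (of_real (\<epsilon> ^ N)) / poly Dh (of_real (\<epsilon> ^ N))) =
         matrix_inv (Ut \<epsilon>) $ d $ k * (act (Uh (\<epsilon> ^ N)) g i j k - gh i j k)"
        using Xrep[OF eN[OF e]] invT[OF d] by simp
    qed simp
  qed
  have limE: "((\<lambda>\<epsilon>. Ut \<epsilon> $ i $ j) \<longlongrightarrow> poly (pt i j) 0) (at_right 0)" for i j
    using pt poly_tendsto0[of "pt i j"] by simp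
  have limU: "((\<lambda>\<epsilon>. act (U \<epsilon>) g a b d) \<longlongrightarrow> gt a b d) (at_right 0)" for a b d
  proof -
    have split: "act (U \<epsilon>) g a b d = act (Ut \<epsilon>) gh a b d +
       (\<Sum>i\<in>UNIV. \<Sum>j\<in>UNIV. \<Sum>k\<in>UNIV. Ut \<epsilon> $ i $ a * Ut \<epsilon> $ j $ b *
          (matrix_inv (Ut \<epsilon>) $ d $ k * (act (Uh (\<epsilon>^N)) g i j k - gh i j k)))"
      if e: "\<epsilon> \<in> {0<..1}" for \<epsilon>
    proof -
      have "act (U \<epsilon>) g a b d = act (Ut \<epsilon>) (act (Uh (\<epsilon>^N)) g) a b d"
        unfolding U_def by (rule act_comp[OF invh[OF eN[OF e]] invt[OF e]])
      also have "\<dots> = act (Ut \<epsilon>) (\<lambda>i j k. gh i j k + (act (Uh (\<epsilon>^N)) g i j k - gh i j k)) a b d"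
        by simp
      also have "\<dots> = act (Ut \<epsilon>) gh a b d + act (Ut \<epsilon>) (\<lambda>i j k. act (Uh (\<epsilon>^N)) g i j k - gh i j k) a b d"
        by (rule act_add)
      finally show ?thesis by (simp add: act_def mult_ac)
    qed
    have lim0: "((\<lambda>\<epsilon>. \<Sum>i\<in>UNIV. \<Sum>j\<in>UNIV. \<Sum>k\<in>UNIV. Ut \<epsilon> $ i $ a * Ut \<epsilon> $ j $ b *
          (matrix_inv (Ut \<epsilon>) $ d $ k * (act (Uh (\<epsilon>^N)) g i j k - gh i j k))) \<longlongrightarrow> 0) (at_right 0)"
    proof (intro tendsto_null_sum)
      fix i j k
      have "((\<lambda>\<epsilon>. Ut \<epsilon> $ i $ a * Ut \<epsilon> $ j $ b *
          (matrix_inv (Ut \<epsilon>) $ d $ k * (act (Uh (\<epsilon>^N)) g i j k - gh i j k))) \<longlongrightarrow>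
          poly (pt i a) 0 * poly (pt j b) 0 * 0) (at_right 0)"
        by (intro tendsto_mult limE limP)
      then show "((\<lambda>\<epsilon>. Ut \<epsilon> $ i $ a * Ut \<epsilon> $ j $ b *
          (matrix_inv (Ut \<epsilon>) $ d $ k * (act (Uh (\<epsilon>^N)) g i j k - gh i j k))) \<longlongrightarrow> 0) (at_right 0)"
        by simp
    qed
    have L: "((\<lambda>\<epsilon>. act (Ut \<epsilon>) gh a b d +
       (\<Sum>i\<in>UNIV. \<Sum>j\<in>UNIV. \<Sum>k\<in>UNIV. Ut \<epsilon> $ i $ a * Ut \<epsilon> $ j $ b *
          (matrix_inv (Ut \<epsilon>) $ d $ k * (act (Uh (\<epsilon>^N)) g i j k - gh i j k)))) \<longlongrightarrow> gt a b d) (at_right 0)"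
      using tendsto_add[OF limT lim0] by simp
    have EV: "\<forall>\<^sub>F \<epsilon> in at_right 0. act (Ut \<epsilon>) gh a b d +
       (\<Sum>i\<in>UNIV. \<Sum>j\<in>UNIV. \<Sum>k\<in>UNIV. Ut \<epsilon> $ i $ a * Ut \<epsilon> $ j $ b *
          (matrix_inv (Ut \<epsilon>) $ d $ k * (act (Uh (\<epsilon>^N)) g i j k - gh i j k))) = act (U \<epsilon>) g a b d"
      unfolding eventually_at_right_field
      by (intro exI[of _ 1] conjI allI impI split[symmetric]) auto
    show ?thesis by (rule tendsto_cong[THEN iffD1, OF EV L])
  qed
  have "contracts g U gt"
    unfolding contracts_act using invU poly_cont[OF pU] limU by blast
  then show ?thesis using pU by blast
qed


theorem mainTheorem13:
  shows
  "(\<forall>(g :: 'n::finite \<Rightarrow> 'n \<Rightarrow> 'n \<Rightarrow> real) gh gt Uh Ut.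
      is_lie_algebra g \<and> is_lie_algebra gh \<and> is_lie_algebra gt \<and>
      contracts g Uh gh \<and> poly_matrix_fun Uh \<and>
      contracts gh Ut gt \<and> poly_matrix_fun Ut \<longrightarrow>
      (\<exists>U. contracts g U gt \<and> poly_matrix_fun U)) \<and>
   (\<forall>(g :: 'n \<Rightarrow> 'n \<Rightarrow> 'n \<Rightarrow> complex) gh gt Uh Ut.
      is_lie_algebra g \<and> is_lie_algebra gh \<and> is_lie_algebra gt \<and>
      contracts g Uh gh \<and> poly_matrix_fun Uh \<and>
      contracts gh Ut gt \<and> poly_matrix_fun Ut \<longrightarrow>
      (\<exists>U. contracts g U gt \<and> poly_matrix_fun U))"
  by (intro conjI allI impI; elim conjE; rule main_gen; assumption)

end
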